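(* Let $\mathbf{T}=(T_1,\dots,T_m)$ and $\mathbf{T}^0=(T^0_1,\dots,T^0_m)$ be real random vectors and $\mathcal{H}_0\subset[m]$ such that for every $i\in\mathcal{H}_0$, $(T_i,T_i^0\mid\mathbf{T}_{-i},\mathbf{T}^0_{-i})\stackrel{d}{=}(T_i^0,T_i\mid\mathbf{T}_{-i},\mathbf{T}^0_{-i})$. Let $g(\cdot;\mathbf{T},\mathbf{T}^0)$ be a (data-dependent) score function and define $U_i=g(T_i;\mathbf{T},\mathbf{T}^0)$, $U_i^0=g(T_i^0;\mathbf{T},\mathbf{T}^0)$, $i\in[m]$. For $\mathcal{J}\subset[m]$ let $(\mathbf{T},\mathbf{T}^0)_{\mathrm{swap}(\mathcal{J})}$ denote the pair of vectors obtained by swapping $T_i$ and $T_i^0$ for each $i\in\mathcal{J}$. If $g(\cdot;(\mathbf{T},\mathbf{T}^0)_{\mathrm{swap}(\mathcal{J})})=g(\cdot;(\mathbf{T},\mathbf{T}^0))$ for all $\mathcal{J}\subset[m]$, then for every $i\in\mathcal{H}_0$, $$(U_i,U_i^0\mid\mathbf{U}_{-i},\mathbf{U}^0_{-i})\stackrel{d}{=}(U_i^0,U_i\mid\mathbf{U}_{-i},\mathbf{U}^0_{-i}),$$ where $\mathbf{U}_{-i}=(U_k:k\ne i)$, $\mathbf{U}^0_{-i}=(U^0_k:k\ne i)$.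
   Context: For a vector $\mathbf{a}=(a_1,\dots,a_m)$, $\mathbf{a}_{-i}$ denotes the vector with the $i$-th entry removed. *)

theory Defs
  imports "HOL-Probability.Probability"
begin

definition vec_space :: "nat \<Rightarrow> (nat \<Rightarrow> real) measure" where
  "vec_space m = PiM {1..m} (\<lambda>_. borel)"

definition pair_vec_space :: "nat \<Rightarrow> ((nat \<Rightarrow> real) \<times> (nat \<Rightarrow> real)) measure" where
  "pair_vec_space m = vec_space m \<Otimes>\<^sub>M vec_space m"

definition swap_coords ::
  "nat set \<Rightarrow> (nat \<Rightarrow> real) \<times> (nat \<Rightarrow> real) \<Rightarrow> (nat \<Rightarrow> real) \<times> (nat \<Rightarrow> real)" where
  "swap_coords J p =
     (\<lambda>k. if k \<in> J then snd p k else fst p k, \<lambda>k. if k \<in> J then fst p k else snd p k)"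

text \<open>(X_i, X0_i | X_{-i}, X0_{-i}) =d (X0_i, X_i | X_{-i}, X0_{-i}):
  equality of conditional laws given the remaining coordinates is equality of the
  joint laws of (X,X0) and of (X,X0) with coordinate i swapped.\<close>
definition cond_exch ::
  "'a measure \<Rightarrow> nat \<Rightarrow> ('a \<Rightarrow> nat \<Rightarrow> real) \<Rightarrow> ('a \<Rightarrow> nat \<Rightarrow> real) \<Rightarrow> nat \<Rightarrow> bool" where
  "cond_exch M m X X0 i \<longleftrightarrow>
     distr M (pair_vec_space m) (\<lambda>\<omega>. swap_coords {i} (X \<omega>, X0 \<omega>))
   = distr M (pair_vec_space m) (\<lambda>\<omega>. (X \<omega>, X0 \<omega>))"

end

theory Submission
  imports Defs
begin

theorem proposition1:
  fixes M :: "'a measure" and m :: nat and H0 :: "nat set"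
    and T T0 :: "'a \<Rightarrow> nat \<Rightarrow> real"
    and g :: "real \<Rightarrow> (nat \<Rightarrow> real) \<times> (nat \<Rightarrow> real) \<Rightarrow> real"
  assumes "prob_space M"
    and "T \<in> M \<rightarrow>\<^sub>M vec_space m"
    and "T0 \<in> M \<rightarrow>\<^sub>M vec_space m"
    and "H0 \<subseteq> {1..m}"
    and "\<forall>i\<in>H0. cond_exch M m T T0 i"
    and "(\<lambda>(x, d). g x d) \<in> borel \<Otimes>\<^sub>M pair_vec_space m \<rightarrow>\<^sub>M borel"
    and "\<forall>J\<subseteq>{1..m}. \<forall>\<omega>\<in>space M. \<forall>x.
           g x (swap_coords J (T \<omega>, T0 \<omega>)) = g x (T \<omega>, T0 \<omega>)"
  shows "\<forall>i\<in>H0. cond_exch M m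
           (\<lambda>\<omega>. restrict (\<lambda>k. g (T \<omega> k) (T \<omega>, T0 \<omega>)) {1..m})
           (\<lambda>\<omega>. restrict (\<lambda>k. g (T0 \<omega> k) (T \<omega>, T0 \<omega>)) {1..m}) i"
proof
  fix i assume iH: "i \<in> H0"
  hence im: "i \<in> {1..m}" using assms(4) by auto
  define \<Phi> where "\<Phi> = (\<lambda>p::(nat \<Rightarrow> real) \<times> (nat \<Rightarrow> real).
      (restrict (\<lambda>k. g (fst p k) p) {1..m}, restrict (\<lambda>k. g (snd p k) p) {1..m}))"
  have gm: "(\<lambda>p. g (h p k) p) \<in> pair_vec_space m \<rightarrow>\<^sub>M borel"
    if h: "h = fst \<or> h = snd" and k: "k \<in> {1..m}" for h k
  proof -
    have "(\<lambda>p. h p k) \<in> pair_vec_space m \<rightarrow>\<^sub>M borel"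
      using h k unfolding pair_vec_space_def vec_space_def by auto
    hence "(\<lambda>p. (h p k, p)) \<in> pair_vec_space m \<rightarrow>\<^sub>M borel \<Otimes>\<^sub>M pair_vec_space m"
      by (intro measurable_Pair) auto
    from measurable_comp[OF this assms(6)] show ?thesis by (simp add: o_def)
  qed
  have \<Phi>m: "\<Phi> \<in> pair_vec_space m \<rightarrow>\<^sub>M pair_vec_space m"
    unfolding \<Phi>_def
    apply (subst (2) pair_vec_space_def)
    apply (intro measurable_Pair)
    unfolding vec_space_def
    using gm by (auto intro!: measurable_restrict)
  have TTm: "(\<lambda>\<omega>. (T \<omega>, T0 \<omega>)) \<in> M \<rightarrow>\<^sub>M pair_vec_space m"
    unfolding pair_vec_space_def using assms(2,3) by (intro measurable_Pair) auto
  have Sm: "(\<lambda>\<omega>. swap_coords {i} (T \<omega>, T0 \<omega>)) \<in> M \<rightarrow>\<^sub>M pair_vec_space m"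
  proof -
    have sp: "T \<omega> \<in> (\<Pi>\<^sub>E k\<in>{1..m}. UNIV)" "T0 \<omega> \<in> (\<Pi>\<^sub>E k\<in>{1..m}. UNIV)"
      if "\<omega> \<in> space M" for \<omega>
      using measurable_space[OF assms(2) that] measurable_space[OF assms(3) that]
      unfolding vec_space_def by (auto simp: space_PiM)
    have a: "(\<lambda>\<omega> k. if k \<in> {i} then T0 \<omega> k else T \<omega> k) \<in> M \<rightarrow>\<^sub>M vec_space m"
      unfolding vec_space_def
      apply (rule measurable_PiM_single')
      subgoal for k
        using assms(2,3) unfolding vec_space_def by auto
      using sp im by (auto simp: PiE_def extensional_def)
    have b: "(\<lambda>\<omega> k. if k \<in> {i} then T \<omega> k else T0 \<omega> k) \<in> M \<rightarrow>\<^sub>M vec_space m"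
      unfolding vec_space_def
      apply (rule measurable_PiM_single')
      subgoal for k
        using assms(2,3) unfolding vec_space_def by auto
      using sp im by (auto simp: PiE_def extensional_def)
    show ?thesis unfolding swap_coords_def pair_vec_space_def fst_conv snd_conv
      using a b by (intro measurable_Pair) (simp_all only: singleton_iff)
  qed
  have eq1: "distr M (pair_vec_space m) (\<lambda>\<omega>. swap_coords {i}
       (restrict (\<lambda>k. g (T \<omega> k) (T \<omega>, T0 \<omega>)) {1..m},
        restrict (\<lambda>k. g (T0 \<omega> k) (T \<omega>, T0 \<omega>)) {1..m}))
     = distr M (pair_vec_space m) (\<lambda>\<omega>. \<Phi> (swap_coords {i} (T \<omega>, T0 \<omega>)))"
  proof (rule distr_cong)
    fix \<omega> assume w: "\<omega> \<in> space M"
    have inv: "g x (swap_coords {i} (T \<omega>, T0 \<omega>)) = g x (T \<omega>, T0 \<omega>)" for x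
      using assms(7) im w by auto
    show "swap_coords {i}
       (restrict (\<lambda>k. g (T \<omega> k) (T \<omega>, T0 \<omega>)) {1..m},
        restrict (\<lambda>k. g (T0 \<omega> k) (T \<omega>, T0 \<omega>)) {1..m})
       = \<Phi> (swap_coords {i} (T \<omega>, T0 \<omega>))"
      unfolding \<Phi>_def inv using im
      by (auto simp: swap_coords_def fun_eq_iff)
  qed auto
  have eq2: "distr M (pair_vec_space m) (\<lambda>\<omega>. (
        restrict (\<lambda>k. g (T \<omega> k) (T \<omega>, T0 \<omega>)) {1..m},
        restrict (\<lambda>k. g (T0 \<omega> k) (T \<omega>, T0 \<omega>)) {1..m}))
     = distr M (pair_vec_space m) (\<lambda>\<omega>. \<Phi> (T \<omega>, T0 \<omega>))"
    by (rule distr_cong) (auto simp: \<Phi>_def)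
  have ce: "distr M (pair_vec_space m) (\<lambda>\<omega>. swap_coords {i} (T \<omega>, T0 \<omega>))
      = distr M (pair_vec_space m) (\<lambda>\<omega>. (T \<omega>, T0 \<omega>))"
    using assms(5) iH unfolding cond_exch_def by auto
  have "distr M (pair_vec_space m) (\<lambda>\<omega>. \<Phi> (swap_coords {i} (T \<omega>, T0 \<omega>)))
      = distr (distr M (pair_vec_space m) (\<lambda>\<omega>. swap_coords {i} (T \<omega>, T0 \<omega>))) (pair_vec_space m) \<Phi>"
    using distr_distr[OF \<Phi>m Sm] by (simp add: o_def)
  also have "\<dots> = distr (distr M (pair_vec_space m) (\<lambda>\<omega>. (T \<omega>, T0 \<omega>))) (pair_vec_space m) \<Phi>"
    using ce by simp
  also have "\<dots> = distr M (pair_vec_space m) (\<lambda>\<omega>. \<Phi> (T \<omega>, T0 \<omega>))"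
    using distr_distr[OF \<Phi>m TTm] by (simp add: o_def)
  finally show "cond_exch M m
           (\<lambda>\<omega>. restrict (\<lambda>k. g (T \<omega> k) (T \<omega>, T0 \<omega>)) {1..m})
           (\<lambda>\<omega>. restrict (\<lambda>k. g (T0 \<omega> k) (T \<omega>, T0 \<omega>)) {1..m}) i"
    unfolding cond_exch_def eq1 eq2 .
qed

end
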